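(* Let $F$, $H$, $X$, $\Omega$, $Q$ and the sequences generated by the IneIREG method be as described in the context, and suppose $H$ is $\mu$-strongly monotone for some $\mu>0$. Let $\varepsilon>0$, let $\mathcal D_0>0$ satisfy $\mathcal D_0\ge\overline\lambda C_HD_X/\underline\lambda$, and suppose $\eta_k\equiv\eta:=\varepsilon/(2\mathcal D_0)$ for all $k\ge0$; $\lambda_k\in[\underline\lambda,\overline\lambda]$ for all $k\ge0$ with $0<\underline\lambda\le\overline\lambda<1/L$, $L:=L_F+\eta L_H$; and $\alpha_0\in[0,1]$ and $\alpha_{k+1}\le(1-\beta_k)\alpha_k$ for all $k\ge0$, where $\beta_k:=\big(\frac{1}{1-\lambda_k^2L^2}+\frac{1}{2\lambda_k\eta\mu}\big)^{-1}$. Define $p_k:=\big(\prod_{i=0}^k(1-\beta_i)\big)^{-1}$ for $k\ge0$, and for $k\ge1$ $\Lambda_k:=\sum_{j=0}^{k-1}\lambda_j\eta p_j$ and $\overline y_k:=\Lambda_k^{-1}\sum_{j=0}^{k-1}\lambda_j\eta p_jy_j$. Let $k\ge1$. If $$k\ge\Big\lceil\Big(\frac{1}{1-\overline\lambda^2L^2}+\frac{\mathcal D_0}{\underline\lambda\mu\varepsilon}\Big)\log\Big(\frac{2(k+1)D_X^2}{\underline\lambda\varepsilon}\Big)\Big\rceil,$$ then $0\le\mathrm{Gap}(\overline y_k,F,X)\le\varepsilon$.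
   Context: Work in $\mathbb{R}^n$ with Euclidean inner product $\langle\cdot,\cdot\rangle$ and norm $\|\cdot\|$; $\log$ is the natural logarithm. The maps $F\colon \mathrm{Dom}\,F\to\mathbb{R}^n$ and $H\colon\mathrm{Dom}\,H\to\mathbb{R}^n$ are monotone and Lipschitz continuous with constants $L_F>0$ and $L_H>0$; $H$ is $\mu$-strongly monotone means $\langle H(x)-H(y),x-y\rangle\ge\mu\|x-y\|^2$ for all $x,y\in\mathrm{Dom}\,H$. $X$ is a nonempty compact convex set and $\Omega$ a nonempty closed convex set with $X\subset\Omega\subset\mathrm{Dom}\,F\cap\mathrm{Dom}\,H$; $P_X,P_\Omega$ denote orthogonal projections. $Q:=\{x\in X:\langle F(x),y-x\rangle\ge0\ \forall y\in X\}$ is assumed nonempty. $D_X:=\sup_{x,y\in X}\|x-y\|$, $C_H:=\sup_{x\in X}\|H(x)\|$. $\mathrm{Gap}(z,F,X):=\sup_{x\in X}\langle F(x),z-x\rangle$. IneIREG method: start with $x_0=x_{-1}\in X$; for $k=0,1,\dots$, with parameters $\alpha_k\ge0$, $\lambda_k>0$, $\eta_k>0$, set $w_k=x_k+\alpha_k(x_k-x_{k-1})$, $w'_k=P_\Omega(w_k)$, $y_k=P_X\big(w_k-\lambda_k(F(w'_k)+\eta_kH(w'_k))\big)$, $x_{k+1}=P_X\big(w_k-\lambda_k(F(y_k)+\eta_kH(y_k))\big)$. *)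

theory Defs
  imports "HOL-Analysis.Analysis"
begin

definition monotone_op :: "('a::real_inner \<Rightarrow> 'a) \<Rightarrow> 'a set \<Rightarrow> bool" where
  "monotone_op F D \<longleftrightarrow> (\<forall>x\<in>D. \<forall>y\<in>D. inner (F x - F y) (x - y) \<ge> 0)"

definition strongly_monotone_op :: "real \<Rightarrow> ('a::real_inner \<Rightarrow> 'a) \<Rightarrow> 'a set \<Rightarrow> bool" where
  "strongly_monotone_op \<mu> F D \<longleftrightarrow> (\<forall>x\<in>D. \<forall>y\<in>D. inner (F x - F y) (x - y) \<ge> \<mu> * (norm (x - y))\<^sup>2)"

definition VI_sol :: "('a::real_inner \<Rightarrow> 'a) \<Rightarrow> 'a set \<Rightarrow> 'a set" where
  "VI_sol F X = {x \<in> X. \<forall>y\<in>X. inner (F x) (y - x) \<ge> 0}"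

definition Gap :: "'a::real_inner \<Rightarrow> ('a \<Rightarrow> 'a) \<Rightarrow> 'a set \<Rightarrow> real" where
  "Gap z F X = (SUP x\<in>X. inner (F x) (z - x))"

abbreviation proj :: "'a::euclidean_space set \<Rightarrow> 'a \<Rightarrow> 'a" where
  "proj S x \<equiv> closest_point S x"

end

theory Submission
  imports Defs
begin


lemma eg_alg:
  fixes w u y xn g1 g2 :: "'a::real_inner"
  assumes P1: "inner (w - lam *\<^sub>R g2 - xn) (u - xn) \<le> 0"
    and P2: "inner (w - lam *\<^sub>R g1 - y) (xn - y) \<le> 0"
    and Lip: "norm (g1 - g2) \<le> L * norm (w - y)"
    and lam: "lam > 0" and L: "L \<ge> 0"
  shows "(norm (xn - u))\<^sup>2 \<le> (norm (w - u))\<^sup>2 - (1 - lam\<^sup>2 * L\<^sup>2) * (norm (w - y))\<^sup>2 - 2 * lam * inner g2 (y - u)"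
proof -
  have e1: "(norm (w - u))\<^sup>2 - (norm (xn - u))\<^sup>2 - (norm (w - y))\<^sup>2 - (norm (y - xn))\<^sup>2 + 2 * lam * inner (g1 - g2) (xn - y) - 2 * lam * inner g2 (y - u)
     = - 2 * inner (w - lam *\<^sub>R g2 - xn) (u - xn) - 2 * inner (w - lam *\<^sub>R g1 - y) (xn - y)"
    by (simp add: power2_norm_eq_inner inner_simps inner_commute algebra_simps)
  have cs: "inner (g1 - g2) (xn - y) \<le> L * norm (w - y) * norm (xn - y)"
    by (metis Cauchy_Schwarz_ineq2 Lip mult_right_mono norm_ge_zero order_trans abs_le_iff)
  have "2 * lam * (L * norm (w - y) * norm (xn - y)) \<le> lam\<^sup>2 * L\<^sup>2 * (norm (w - y))\<^sup>2 + (norm (xn - y))\<^sup>2"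
  proof -
    have "0 \<le> (lam * L * norm (w - y) - norm (xn - y))\<^sup>2" by simp
    thus ?thesis by (simp add: power2_eq_square algebra_simps)
  qed
  moreover have "norm (y - xn) = norm (xn - y)" by (simp add: norm_minus_commute)
  moreover have "2 * lam * inner (g1 - g2) (xn - y) \<le> 2 * lam * (L * norm (w - y) * norm (xn - y))"
    using cs lam by simp
  ultimately show ?thesis using e1 P1 P2 by (simp add: algebra_simps)
qed

lemma harm_ineq:
  fixes w u y :: "'a::real_normed_vector"
  assumes a: "a > 0" and b: "b > 0"
  shows "inverse (1/a + 1/b) * (norm (w - u))\<^sup>2 \<le> a * (norm (w - y))\<^sup>2 + b * (norm (y - u))\<^sup>2"
proof -
  define s where "s = norm (w - y)"
  define t where "t = norm (y - u)"
  have tri: "norm (w - u) \<le> s + t" unfolding s_def t_def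
    by (metis diff_add_cancel add_diff_eq norm_triangle_ineq diff_diff_add add.commute)
  have n0: "0 \<le> norm (w - u)" by simp
  have sq: "(norm (w - u))\<^sup>2 \<le> (s + t)\<^sup>2" using tri n0 power_mono by blast
  have key: "(s + t)\<^sup>2 * (a * b) \<le> (a * s\<^sup>2 + b * t\<^sup>2) * (a + b)"
  proof -
    have "0 \<le> (a * s - b * t)\<^sup>2" by simp
    thus ?thesis by (simp add: power2_eq_square algebra_simps)
  qed
  have inv: "inverse (1/a + 1/b) = a * b / (a + b)" using a b by (simp add: field_simps)
  have "inverse (1/a + 1/b) * (norm (w - u))\<^sup>2 \<le> a * b / (a + b) * (s + t)\<^sup>2"
    unfolding inv using sq a b by (intro mult_left_mono) auto
  also have "\<dots> \<le> a * s\<^sup>2 + b * t\<^sup>2" using key a b by (simp add: field_simps)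
  finally show ?thesis unfolding s_def t_def .
qed

lemma eg_step:
  fixes F H :: "'a::euclidean_space \<Rightarrow> 'a"
  assumes F_mono: "monotone_op F DomF" and F_lip: "LF-lipschitz_on DomF F"
    and H_lip: "LH-lipschitz_on DomH H" and H_strong: "strongly_monotone_op \<mu> H DomH"
    and Xc: "convex X" "closed X" "X \<noteq> {}" and Om: "convex \<Omega>" "closed \<Omega>" "\<Omega> \<noteq> {}"
    and sub: "X \<subseteq> \<Omega>" "\<Omega> \<subseteq> DomF \<inter> DomH"
    and eta: "\<eta> > 0" and lam: "lam > 0" and mu: "\<mu> > 0" and L: "L = LF + \<eta> * LH"
    and LF: "LF \<ge> 0" and LH: "LH \<ge> 0"
    and lamL: "lam\<^sup>2 * L\<^sup>2 < 1"
    and w': "w' = proj \<Omega> w" and y: "y = proj X (w - lam *\<^sub>R (F w' + \<eta> *\<^sub>R H w'))"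
    and xn: "xn = proj X (w - lam *\<^sub>R (F y + \<eta> *\<^sub>R H y))" and u: "u \<in> X"
  shows "2 * lam * inner (F u) (y - u) \<le> (1 - inverse (1 / (1 - lam\<^sup>2 * L\<^sup>2) + 1 / (2 * lam * \<eta> * \<mu>))) * (norm (w - u))\<^sup>2
           - (norm (xn - u))\<^sup>2 - 2 * lam * \<eta> * inner (H u) (y - u)"
proof -
  define g1 where "g1 = F w' + \<eta> *\<^sub>R H w'"
  define g2 where "g2 = F y + \<eta> *\<^sub>R H y"
  have yX: "y \<in> X" unfolding y using closest_point_in_set[OF Xc(2,3)] by blast
  have xnX: "xn \<in> X" unfolding xn using closest_point_in_set[OF Xc(2,3)] by blast
  have w'O: "w' \<in> \<Omega>" unfolding w' using closest_point_in_set[OF Om(2,3)] by blast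
  have yO: "y \<in> \<Omega>" using yX sub by blast
  have uD: "u \<in> DomF" "u \<in> DomH" using u sub by auto
  have yD: "y \<in> DomF" "y \<in> DomH" using yO sub by auto
  have w'D: "w' \<in> DomF" "w' \<in> DomH" using w'O sub by auto
  have P1: "inner (w - lam *\<^sub>R g2 - xn) (u - xn) \<le> 0"
    unfolding xn g2_def using closest_point_dot[OF Xc(1,2) u] by blast
  have P2: "inner (w - lam *\<^sub>R g1 - y) (xn - y) \<le> 0"
    unfolding g1_def using closest_point_dot[OF Xc(1,2) xnX] y by blast
  have dw: "dist w' y \<le> dist w y"
    using closest_point_lipschitz[OF Om, of w y] closest_point_self[OF yO] w' by simp
  have Lip: "norm (g1 - g2) \<le> L * norm (w - y)"
  proof -
    have "g1 - g2 = (F w' - F y) + \<eta> *\<^sub>R (H w' - H y)" unfolding g1_def g2_def by (simp add: algebra_simps)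
    hence "norm (g1 - g2) \<le> norm (F w' - F y) + \<eta> * norm (H w' - H y)"
      using eta by (metis abs_of_pos norm_scaleR norm_triangle_ineq)
    also have "\<dots> \<le> LF * dist w' y + \<eta> * (LH * dist w' y)"
      using lipschitz_onD[OF F_lip w'D(1) yD(1)] lipschitz_onD[OF H_lip w'D(2) yD(2)] eta
      by (intro add_mono mult_left_mono) (auto simp: dist_norm)
    also have "\<dots> = L * dist w' y" unfolding L by (simp add: algebra_simps)
    also have "\<dots> \<le> L * dist w y" using dw L LF LH eta by (intro mult_left_mono) auto
    finally show ?thesis by (simp add: dist_norm)
  qed
  have A: "(norm (xn - u))\<^sup>2 \<le> (norm (w - u))\<^sup>2 - (1 - lam\<^sup>2 * L\<^sup>2) * (norm (w - y))\<^sup>2 - 2 * lam * inner g2 (y - u)"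
    using eg_alg[OF P1 P2 Lip lam] L LF LH eta by simp
  have Fm: "inner (F y - F u) (y - u) \<ge> 0" using F_mono yD uD unfolding monotone_op_def by blast
  have Hm: "inner (H y - H u) (y - u) \<ge> \<mu> * (norm (y - u))\<^sup>2" using H_strong yD uD unfolding strongly_monotone_op_def by blast
  have B: "inner g2 (y - u) \<ge> inner (F u) (y - u) + \<eta> * inner (H u) (y - u) + \<eta> * \<mu> * (norm (y - u))\<^sup>2"
  proof -
    have "inner g2 (y - u) = inner (F y - F u) (y - u) + inner (F u) (y - u) + \<eta> * inner (H y - H u) (y - u) + \<eta> * inner (H u) (y - u)"
      unfolding g2_def by (simp add: inner_simps algebra_simps)
    moreover have "\<eta> * inner (H y - H u) (y - u) \<ge> \<eta> * (\<mu> * (norm (y - u))\<^sup>2)" using Hm eta by (intro mult_left_mono) auto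
    ultimately show ?thesis using Fm by simp
  qed
  have a: "1 - lam\<^sup>2 * L\<^sup>2 > 0" using lamL by simp
  have b: "2 * lam * \<eta> * \<mu> > 0" using lam eta mu by simp
  have C: "inverse (1 / (1 - lam\<^sup>2 * L\<^sup>2) + 1 / (2 * lam * \<eta> * \<mu>)) * (norm (w - u))\<^sup>2
     \<le> (1 - lam\<^sup>2 * L\<^sup>2) * (norm (w - y))\<^sup>2 + (2 * lam * \<eta> * \<mu>) * (norm (y - u))\<^sup>2"
    using harm_ineq[OF a b] by blast
  have B2: "2 * lam * inner g2 (y - u) \<ge> 2 * lam * inner (F u) (y - u) + 2 * lam * \<eta> * inner (H u) (y - u) + (2 * lam * \<eta> * \<mu>) * (norm (y - u))\<^sup>2"
    using mult_left_mono[OF B, of "2 * lam"] lam by (simp add: algebra_simps)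
  show ?thesis using A B2 C by (simp add: algebra_simps)
qed


lemma norm_inertial_id:
  fixes a b :: "'a::real_inner"
  shows "(norm ((1 + t) *\<^sub>R a - t *\<^sub>R b))\<^sup>2 = (1 + t) * (norm a)\<^sup>2 - t * (norm b)\<^sup>2 + t * (1 + t) * (norm (a - b))\<^sup>2"
  by (simp add: power2_norm_eq_inner inner_simps inner_commute algebra_simps)

theorem corollary4p19:
  fixes F H :: "'a::euclidean_space \<Rightarrow> 'a"
    and DomF DomH X \<Omega> :: "'a set"
    and LF LH \<mu> \<epsilon> D0 \<eta> L lam_lo lam_hi :: real
    and \<alpha> lam \<beta> p \<Lambda> :: "nat \<Rightarrow> real"
    and x w w' y ybar :: "nat \<Rightarrow> 'a"
    and k :: nat
  assumes F_mono: "monotone_op F DomF" and F_lip: "LF-lipschitz_on DomF F" and LF_pos: "LF > 0"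
    and H_mono: "monotone_op H DomH" and H_lip: "LH-lipschitz_on DomH H" and LH_pos: "LH > 0"
    and H_strong: "strongly_monotone_op \<mu> H DomH" and mu_pos: "\<mu> > 0"
    and X_ne: "X \<noteq> {}" and X_compact: "compact X" and X_convex: "convex X"
    and Om_ne: "\<Omega> \<noteq> {}" and Om_closed: "closed \<Omega>" and Om_convex: "convex \<Omega>"
    and X_sub: "X \<subseteq> \<Omega>" and Om_sub: "\<Omega> \<subseteq> DomF \<inter> DomH"
    and Q_ne: "VI_sol F X \<noteq> {}"
    and eps_pos: "\<epsilon> > 0"
    and D0_pos: "D0 > 0"
    and D0_ge: "D0 \<ge> lam_hi * (SUP z\<in>X. norm (H z)) * diameter X / lam_lo"
    and eta_def: "\<eta> = \<epsilon> / (2 * D0)"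
    and L_def: "L = LF + \<eta> * LH"
    and lam_lo_pos: "0 < lam_lo" and lam_lo_hi: "lam_lo \<le> lam_hi" and lam_hi_lt: "lam_hi < 1 / L"
    and lam_range: "\<And>j. lam_lo \<le> lam j \<and> lam j \<le> lam_hi"
    and alpha_nonneg: "\<And>j. \<alpha> j \<ge> 0"
    and alpha0: "\<alpha> 0 \<le> 1"
    and beta_def: "\<And>j. \<beta> j = inverse (1 / (1 - (lam j)\<^sup>2 * L\<^sup>2) + 1 / (2 * lam j * \<eta> * \<mu>))"
    and alpha_dec: "\<And>j. \<alpha> (Suc j) \<le> (1 - \<beta> j) * \<alpha> j"
    and x0: "x 0 \<in> X"
    and w_def: "\<And>j. w j = x j + \<alpha> j *\<^sub>R (x j - (if j = 0 then x 0 else x (j - 1)))"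
    and w'_def: "\<And>j. w' j = proj \<Omega> (w j)"
    and y_def: "\<And>j. y j = proj X (w j - lam j *\<^sub>R (F (w' j) + \<eta> *\<^sub>R H (w' j)))"
    and x_def: "\<And>j. x (Suc j) = proj X (w j - lam j *\<^sub>R (F (y j) + \<eta> *\<^sub>R H (y j)))"
    and p_def: "\<And>j. p j = inverse (\<Prod>i\<in>{0..j}. (1 - \<beta> i))"
    and Lambda_def: "\<And>j. j \<ge> 1 \<Longrightarrow> \<Lambda> j = (\<Sum>i<j. lam i * \<eta> * p i)"
    and ybar_def: "\<And>j. j \<ge> 1 \<Longrightarrow> ybar j = inverse (\<Lambda> j) *\<^sub>R (\<Sum>i<j. (lam i * \<eta> * p i) *\<^sub>R y i)"
    and k_ge1: "k \<ge> 1"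
    and k_large: "real k \<ge> of_int \<lceil>(1 / (1 - lam_hi\<^sup>2 * L\<^sup>2) + D0 / (lam_lo * \<mu> * \<epsilon>))
                    * ln (2 * (real k + 1) * (diameter X)\<^sup>2 / (lam_lo * \<epsilon>))\<rceil>"
  shows "0 \<le> Gap (ybar k) F X \<and> Gap (ybar k) F X \<le> \<epsilon>"
proof -
  have eta_pos: "\<eta> > 0" using eta_def eps_pos D0_pos by simp
  have L_pos: "L > 0" using L_def LF_pos LH_pos eta_pos by (simp add: add_pos_pos)
  have lam_pos: "\<And>j. lam j > 0" using lam_range lam_lo_pos by (meson less_le_trans)
  have lamhi_pos: "lam_hi > 0" using lam_lo_pos lam_lo_hi by simp
  have lamhiL: "lam_hi * L < 1" using lam_hi_lt L_pos by (simp add: field_simps)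
  have "(lam_hi * L) * (lam_hi * L) < 1 * 1"
    using lamhiL lamhi_pos L_pos by (intro mult_strict_mono) auto
  hence lamhiL2: "lam_hi\<^sup>2 * L\<^sup>2 < 1" by (simp add: power2_eq_square algebra_simps)
  have lamL2: "\<And>j. (lam j)\<^sup>2 * L\<^sup>2 \<le> lam_hi\<^sup>2 * L\<^sup>2"
    using lam_range lam_pos by (intro mult_right_mono power_mono) (auto intro: less_imp_le)
  have lamL2': "\<And>j. (lam j)\<^sup>2 * L\<^sup>2 < 1" using lamL2 lamhiL2 by (meson le_less_trans)
  define M where "M = 1 / (1 - lam_hi\<^sup>2 * L\<^sup>2) + D0 / (lam_lo * \<mu> * \<epsilon>)"
  define B where "B j = 1 / (1 - (lam j)\<^sup>2 * L\<^sup>2) + 1 / (2 * lam j * \<eta> * \<mu>)" for j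
  have B_le: "B j \<le> M" for j
  proof -
    have "1 / (2 * lam j * \<eta> * \<mu>) = D0 / (lam j * \<mu> * \<epsilon>)"
      using eta_def D0_pos eps_pos lam_pos[of j] mu_pos eta_pos by (simp add: field_simps)
    also have "\<dots> \<le> D0 / (lam_lo * \<mu> * \<epsilon>)"
      using D0_pos lam_range[of j] lam_lo_pos mu_pos eps_pos
      by (intro divide_left_mono mult_right_mono mult_pos_pos) auto
    finally have 1: "1 / (2 * lam j * \<eta> * \<mu>) \<le> D0 / (lam_lo * \<mu> * \<epsilon>)" .
    have 2: "1 / (1 - (lam j)\<^sup>2 * L\<^sup>2) \<le> 1 / (1 - lam_hi\<^sup>2 * L\<^sup>2)"
      using lamL2[of j] lamhiL2 by (intro divide_left_mono mult_pos_pos) auto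
    show ?thesis unfolding B_def M_def using 1 2 by simp
  qed
  have B_gt1: "B j > 1" for j
  proof -
    have "1 \<le> 1 / (1 - (lam j)\<^sup>2 * L\<^sup>2)" using lamL2'[of j]
      by (simp add: field_simps)
    moreover have "1 / (2 * lam j * \<eta> * \<mu>) > 0" using lam_pos[of j] eta_pos mu_pos by simp
    ultimately show ?thesis unfolding B_def by linarith
  qed
  have beta_B: "\<beta> j = inverse (B j)" for j using beta_def unfolding B_def by simp
  have beta_pos: "\<beta> j > 0" for j using B_gt1[of j] beta_B by simp
  have beta_lt1: "\<beta> j < 1" for j using B_gt1[of j] beta_B by (simp add: inverse_less_1_iff)
  have M_pos: "M > 0" using B_le[of 0] B_gt1[of 0] by simp
  have beta_ge: "\<beta> j \<ge> inverse M" for j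
    using beta_B le_imp_inverse_le[OF B_le[of j]] B_gt1[of j] by simp
  define q where "q j = inverse (\<Prod>i<j. 1 - \<beta> i)" for j
  have prodpos: "(\<Prod>i<j. 1 - \<beta> i) > 0" for j using beta_lt1 by (intro prod_pos) auto
  have prodle1: "(\<Prod>i<j. 1 - \<beta> i) \<le> 1" for j
    using beta_lt1 beta_pos by (intro prod_le_1) (auto intro: less_imp_le)
  have q_ge1: "q j \<ge> 1" for j unfolding q_def using prodpos prodle1 by (intro one_le_inverse)
  have q_pos: "q j > 0" for j using q_ge1[of j] by simp
  have q0: "q 0 = 1" unfolding q_def by simp
  have q_Suc: "q (Suc j) * (1 - \<beta> j) = q j" for j
  proof -
    have "1 - \<beta> j \<noteq> 0" using beta_lt1[of j] by simp
    thus ?thesis unfolding q_def by (simp add: inverse_mult_distrib)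
  qed
  have p_q: "p j = q (Suc j)" for j
    unfolding p_def q_def by (simp add: atLeast0AtMost lessThan_Suc_atMost)
  define c where "c j = q j * \<alpha> j" for j
  have c_dec: "c (Suc j) \<le> c j" for j
  proof -
    have "c (Suc j) \<le> q (Suc j) * ((1 - \<beta> j) * \<alpha> j)"
      unfolding c_def using alpha_dec[of j] q_pos[of "Suc j"] by (intro mult_left_mono) auto
    also have "\<dots> = c j" unfolding c_def by (metis q_Suc mult.assoc)
    finally show ?thesis .
  qed
  have c_nonneg: "c j \<ge> 0" for j unfolding c_def using q_pos alpha_nonneg by (simp add: less_imp_le)
  have c_le: "c j \<le> 1" for j
  proof (induction j)
    case 0 then show ?case using alpha0 q0 by (simp add: c_def)
  next
    case (Suc j) then show ?case using c_dec[of j] by simp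
  qed
  have c0: "c 0 \<le> 1" using c_le by simp
  have alpha_le1: "\<alpha> j \<le> 1" for j
  proof -
    have "\<alpha> j \<le> q j * \<alpha> j" using q_ge1[of j] alpha_nonneg[of j] mult_right_mono by fastforce
    thus ?thesis using c_le[of j] unfolding c_def by simp
  qed
  have X_closed: "closed X" using X_compact compact_imp_closed by blast
  have X_bdd: "bounded X" using X_compact compact_imp_bounded by blast
  have xX: "x j \<in> X" for j
    by (cases j) (use x0 x_def closest_point_in_set[OF X_closed X_ne] in auto)
  have yX: "y j \<in> X" for j using y_def closest_point_in_set[OF X_closed X_ne] by simp
  define D where "D = diameter X"
  have distD: "norm (a - b) \<le> D" if "a \<in> X" "b \<in> X" for a b
    using diameter_bounded_bound[OF X_bdd that] unfolding D_def by (simp add: dist_norm)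
  have sqD: "(norm (a - b))\<^sup>2 \<le> D\<^sup>2" if "a \<in> X" "b \<in> X" for a b
    using distD[OF that] by (intro power_mono) auto
  have D_nonneg: "D \<ge> 0" using distD[OF x0 x0] by simp
  define CH where "CH = (SUP z\<in>X. norm (H z))"
  have bddH: "bdd_above ((\<lambda>z. norm (H z)) ` X)"
  proof (rule bdd_aboveI2)
    fix z assume z: "z \<in> X"
    have "norm (H z) \<le> norm (H (x 0)) + norm (H z - H (x 0))" by (rule norm_triangle_sub)
    also have "norm (H z - H (x 0)) \<le> LH * dist z (x 0)"
      using lipschitz_onD[OF H_lip, of z "x 0"] z x0 X_sub Om_sub by (auto simp: dist_norm)
    also have "\<dots> \<le> LH * D" using distD[OF z x0] LH_pos by (simp add: dist_norm)
    finally show "norm (H z) \<le> norm (H (x 0)) + LH * D" by simp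
  qed
  have Hle: "norm (H u) \<le> CH" if "u \<in> X" for u unfolding CH_def using bddH that by (rule cSUP_upper2) simp
  have CH_nonneg: "CH \<ge> 0" using Hle[OF x0] norm_ge_zero order_trans by blast
  have CD_le: "CH * D \<le> D0"
  proof -
    have "lam_lo * (CH * D) \<le> lam_hi * (CH * D)"
      using lam_lo_hi CH_nonneg D_nonneg by (intro mult_right_mono) auto
    hence "CH * D \<le> lam_hi * CH * D / lam_lo" using lam_lo_pos by (simp add: field_simps)
    thus ?thesis using D0_ge unfolding CH_def D_def by simp
  qed
  have etaCD: "\<eta> * CH * D \<le> \<epsilon> / 2"
  proof -
    have "\<eta> * CH * D = \<epsilon> / (2 * D0) * (CH * D)" using eta_def by simp
    also have "\<dots> \<le> \<epsilon> / (2 * D0) * D0" using CD_le eps_pos D0_pos by (intro mult_left_mono) auto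
    also have "\<dots> = \<epsilon> / 2" using D0_pos by simp
    finally show ?thesis .
  qed
  define S where "S = (\<Sum>j<k. lam j * p j)"
  have S_ge: "S \<ge> lam_lo * q k"
  proof -
    have "lam_lo * q k \<le> lam (k - 1) * p (k - 1)"
      using lam_range[of "k - 1"] q_pos[of k] p_q[of "k - 1"] k_ge1 lam_lo_pos
      by (intro mult_mono) auto
    also have "\<dots> \<le> S" unfolding S_def using k_ge1 lam_pos q_pos p_q
      by (intro member_le_sum) (auto intro: less_imp_le)
    finally show ?thesis .
  qed
  have S_pos: "S > 0" using S_ge lam_lo_pos q_pos[of k] by (smt (verit) mult_pos_pos)
  define A where "A = 2 * (real k + 1) * D\<^sup>2 / (lam_lo * \<epsilon>)"
  have qk_exp: "q k \<ge> exp (real k / M)"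
  proof -
    have "(\<Prod>i<k. 1 - \<beta> i) \<le> (\<Prod>i<k. 1 - inverse M)"
      using beta_ge beta_lt1 by (intro prod_mono) (auto intro: less_imp_le)
    also have "\<dots> = (1 - inverse M) ^ k" by simp
    also have "\<dots> \<le> exp (- inverse M) ^ k"
      using beta_ge[of 0] beta_lt1[of 0]
      by (intro power_mono) (use exp_ge_add_one_self[of "- inverse M"] in auto)
    also have "\<dots> = exp (- (real k / M))" by (simp add: exp_of_nat_mult[symmetric] divide_inverse)
    finally have "(\<Prod>i<k. 1 - \<beta> i) \<le> exp (- (real k / M))" .
    hence "inverse (exp (- (real k / M))) \<le> q k" unfolding q_def
      using prodpos[of k] by (intro le_imp_inverse_le)
    thus ?thesis by (simp add: exp_minus)
  qed
  have qk_A: "q k \<ge> A"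
  proof (cases "A > 0")
    case False thus ?thesis using q_pos[of k] by simp
  next
    case True
    have "M * ln A \<le> real k" using k_large le_of_int_ceiling[of "M * ln A"]
      unfolding M_def A_def D_def by linarith
    hence "ln A \<le> real k / M" using M_pos by (simp add: field_simps)
    hence "exp (ln A) \<le> exp (real k / M)" by simp
    thus ?thesis using True qk_exp by simp
  qed
  have val_le: "inner (F u) (ybar k - u) \<le> \<epsilon>" if u: "u \<in> X" for u
  proof -
    define d where "d j = (norm (x j - u))\<^sup>2" for j
    define xp where "xp j = (if j = 0 then x 0 else x (j - 1))" for j
    define dp where "dp j = (norm (xp j - u))\<^sup>2" for j
    have xpX: "xp j \<in> X" for j unfolding xp_def using xX by simp
    have dD: "d j \<le> D\<^sup>2" for j unfolding d_def using sqD[OF xX u] .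
    have dpD: "dp j \<le> D\<^sup>2" for j unfolding dp_def using sqD[OF xpX u] .
    have d_nonneg: "d j \<ge> 0" for j unfolding d_def by simp
    have dp_nonneg: "dp j \<ge> 0" for j unfolding dp_def by simp
    have dp_Suc: "dp (Suc j) = d j" for j unfolding dp_def d_def xp_def by simp
    have dp0: "dp 0 = d 0" unfolding dp_def d_def xp_def by simp
    have KI: "2 * lam j * inner (F u) (y j - u) \<le> (1 - \<beta> j) * (norm (w j - u))\<^sup>2 - d (Suc j) + 2 * lam j * \<eta> * CH * D" for j
    proof -
      have e: "2 * lam j * inner (F u) (y j - u) \<le> (1 - \<beta> j) * (norm (w j - u))\<^sup>2
           - (norm (x (Suc j) - u))\<^sup>2 - 2 * lam j * \<eta> * inner (H u) (y j - u)"
        using eg_step[OF F_mono F_lip H_lip H_strong X_convex X_closed X_ne Om_convex Om_closed Om_ne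
            X_sub Om_sub eta_pos lam_pos[of j] mu_pos L_def _ _ lamL2'[of j] w'_def[of j] y_def[of j] x_def[of j] u]
          LF_pos LH_pos beta_def[of j] by simp
      have "- inner (H u) (y j - u) \<le> norm (H u) * norm (y j - u)"
        by (metis Cauchy_Schwarz_ineq2 abs_le_iff)
      also have "\<dots> \<le> CH * D" using Hle[OF u] distD[OF yX u] CH_nonneg by (intro mult_mono) auto
      finally have "- inner (H u) (y j - u) \<le> CH * D" .
      hence "2 * lam j * \<eta> * (- inner (H u) (y j - u)) \<le> 2 * lam j * \<eta> * (CH * D)"
        using lam_pos[of j] eta_pos by (intro mult_left_mono) auto
      thus ?thesis using e unfolding d_def by (simp add: algebra_simps)
    qed
    have Iner: "q j * (norm (w j - u))\<^sup>2 \<le> q j * d j + c j * (d j - dp j) + 2 * D\<^sup>2" for j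
    proof -
      have wu: "w j - u = (1 + \<alpha> j) *\<^sub>R (x j - u) - \<alpha> j *\<^sub>R (xp j - u)"
        using w_def[of j] unfolding xp_def by (simp add: algebra_simps)
      have id: "(norm (w j - u))\<^sup>2 = (1 + \<alpha> j) * d j - \<alpha> j * dp j + \<alpha> j * (1 + \<alpha> j) * (norm (x j - xp j))\<^sup>2"
        unfolding wu d_def dp_def using norm_inertial_id[of "\<alpha> j" "x j - u" "xp j - u"] by simp
      have "c j * ((1 + \<alpha> j) * (norm (x j - xp j))\<^sup>2) \<le> 1 * (2 * D\<^sup>2)"
        using c_le[of j] c_nonneg[of j] alpha_le1[of j] alpha_nonneg[of j] sqD[OF xX xpX] D_nonneg
        by (intro mult_mono) auto
      thus ?thesis unfolding id c_def by (simp add: algebra_simps)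
    qed
    have W: "2 * (lam j * p j * inner (F u) (y j - u)) \<le> q j * (norm (w j - u))\<^sup>2 - q (Suc j) * d (Suc j) + 2 * \<eta> * CH * D * (lam j * p j)" for j
    proof -
      have "p j * (2 * lam j * inner (F u) (y j - u)) \<le> p j * ((1 - \<beta> j) * (norm (w j - u))\<^sup>2 - d (Suc j) + 2 * lam j * \<eta> * CH * D)"
        using KI[of j] q_pos[of "Suc j"] p_q[of j] by (intro mult_left_mono) auto
      moreover have "p j * ((1 - \<beta> j) * (norm (w j - u))\<^sup>2) = q j * (norm (w j - u))\<^sup>2"
        using q_Suc[of j] p_q[of j] by (metis mult.assoc)
      moreover have "p j * ((1 - \<beta> j) * (norm (w j - u))\<^sup>2 - d (Suc j) + 2 * lam j * \<eta> * CH * D)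
         = p j * ((1 - \<beta> j) * (norm (w j - u))\<^sup>2) - p j * d (Suc j) + 2 * \<eta> * CH * D * (lam j * p j)"
        by (simp add: algebra_simps)
      moreover have "p j * (2 * lam j * inner (F u) (y j - u)) = 2 * (lam j * p j * inner (F u) (y j - u))"
        by (simp add: algebra_simps)
      moreover have "p j * d (Suc j) = q (Suc j) * d (Suc j)" using p_q[of j] by simp
      ultimately show ?thesis by linarith
    qed
    have IND: "2 * (\<Sum>j<n. lam j * p j * inner (F u) (y j - u)) \<le> d 0 - q n * d n + D\<^sup>2 * (c 0 - c n) + c n * dp n
          + 2 * real n * D\<^sup>2 + 2 * \<eta> * CH * D * (\<Sum>j<n. lam j * p j)" for n
    proof (induction n)
      case 0 show ?case using q0 dp0 c_nonneg[of 0] d_nonneg[of 0] by simp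
    next
      case (Suc n)
      have m: "c n * d n \<le> (c n - c (Suc n)) * D\<^sup>2 + c (Suc n) * d n"
      proof -
        have "0 \<le> (c n - c (Suc n)) * (D\<^sup>2 - d n)" using c_dec[of n] dD[of n] by simp
        thus ?thesis by (simp add: algebra_simps)
      qed
      show ?case using Suc.IH W[of n] Iner[of n] m dp_Suc[of n]
        by (simp add: algebra_simps sum_distrib_left)
    qed
    have main: "(\<Sum>j<k. lam j * p j * inner (F u) (y j - u)) \<le> (real k + 1) * D\<^sup>2 + \<eta> * CH * D * S"
    proof -
      have "c k * dp k \<le> c k * D\<^sup>2" using dpD[of k] c_nonneg[of k] by (intro mult_left_mono) auto
      moreover have "0 \<le> q k * d k" using q_pos[of k] d_nonneg[of k] by simp
      moreover have "D\<^sup>2 * c 0 \<le> D\<^sup>2" using c0 by (simp add: mult_left_le)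
      ultimately show ?thesis using IND[of k] dD[of 0] unfolding S_def by (simp add: algebra_simps)
    qed
    have Lam: "\<Lambda> k = \<eta> * S" using Lambda_def[OF k_ge1] unfolding S_def
      by (simp add: sum_distrib_left algebra_simps)
    have valS: "inner (F u) (ybar k - u) * S = (\<Sum>j<k. lam j * p j * inner (F u) (y j - u))"
    proof -
      have "inner (F u) (ybar k) = inverse (\<eta> * S) * (\<Sum>j<k. (lam j * \<eta> * p j) * inner (F u) (y j))"
        using ybar_def[OF k_ge1] Lam by (simp add: inner_sum_right)
      also have "\<dots> = inverse S * (\<Sum>j<k. lam j * p j * inner (F u) (y j))"
      proof -
        have "(\<Sum>j<k. (lam j * \<eta> * p j) * inner (F u) (y j)) = \<eta> * (\<Sum>j<k. lam j * p j * inner (F u) (y j))"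
          by (simp add: sum_distrib_left mult_ac)
        thus ?thesis using eta_pos by simp
      qed
      finally have "inner (F u) (ybar k) * S = (\<Sum>j<k. lam j * p j * inner (F u) (y j))"
        using S_pos by simp
      moreover have "(\<Sum>j<k. lam j * p j * inner (F u) (y j - u)) = (\<Sum>j<k. lam j * p j * inner (F u) (y j)) - S * inner (F u) u"
        unfolding S_def by (simp add: inner_diff_right right_diff_distrib sum_subtractf sum_distrib_right)
      ultimately show ?thesis by (simp add: inner_diff_right algebra_simps)
    qed
    have "(real k + 1) * D\<^sup>2 \<le> \<epsilon> / 2 * S"
    proof -
      have "(real k + 1) * D\<^sup>2 = \<epsilon> / 2 * (lam_lo * A)" unfolding A_def using lam_lo_pos eps_pos by (simp add: field_simps)
      also have "\<dots> \<le> \<epsilon> / 2 * (lam_lo * q k)" using qk_A lam_lo_pos eps_pos by (intro mult_left_mono) auto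
      also have "\<dots> \<le> \<epsilon> / 2 * S" using S_ge eps_pos by (intro mult_left_mono) auto
      finally show ?thesis .
    qed
    moreover have "\<eta> * CH * D * S \<le> \<epsilon> / 2 * S" using etaCD S_pos by (intro mult_right_mono) auto
    ultimately have "inner (F u) (ybar k - u) * S \<le> \<epsilon> * S" using valS main by simp
    thus ?thesis using S_pos by simp
  qed
  have ybarX: "ybar k \<in> X"
  proof -
    have Lam: "\<Lambda> k = \<eta> * S" using Lambda_def[OF k_ge1] unfolding S_def
      by (simp add: sum_distrib_left algebra_simps)
    have "ybar k = (\<Sum>j<k. (inverse (\<Lambda> k) * (lam j * \<eta> * p j)) *\<^sub>R y j)"
      using ybar_def[OF k_ge1] by (simp add: scaleR_sum_right)
    also have "\<dots> \<in> X"
    proof (rule convex_sum[OF _ X_convex])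
      show "(\<Sum>j<k. inverse (\<Lambda> k) * (lam j * \<eta> * p j)) = 1"
      proof -
        have "(\<Sum>j<k. inverse (\<Lambda> k) * (lam j * \<eta> * p j)) = inverse (\<Lambda> k) * \<Lambda> k"
          using Lambda_def[OF k_ge1] by (simp add: sum_distrib_left)
        also have "\<dots> = 1" using Lam S_pos eta_pos by (simp add: field_simps)
        finally show ?thesis .
      qed
      show "0 \<le> inverse (\<Lambda> k) * (lam j * \<eta> * p j)" if "j \<in> {..<k}" for j
        using Lam S_pos eta_pos lam_pos[of j] q_pos[of "Suc j"] p_q[of j] by simp
    qed (use yX in auto)
    finally show ?thesis .
  qed
  have bdd: "bdd_above ((\<lambda>u. inner (F u) (ybar k - u)) ` X)"
    using val_le by (intro bdd_aboveI2) auto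
  have "0 \<le> Gap (ybar k) F X"
    unfolding Gap_def using cSUP_upper[OF ybarX bdd] by simp
  moreover have "Gap (ybar k) F X \<le> \<epsilon>"
    unfolding Gap_def using X_ne val_le by (intro cSUP_least) auto
  ultimately show ?thesis by simp
qed

end
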